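(* Let $\xi\in\mathbb{R}\setminus\mathbb{Q}$, let $n\ge1$ be an integer, and let $q$ be the denominator of a convergent of the continued fraction expansion of $\xi$. Then the last (i.e. $(n+1)$-st) successive minimum of the convex body $\mathcal{C}(q)$ with respect to the lattice $\mathbb{Z}[T]_{\le n}$ is $\le 2^n$, and its first successive minimum is $\ge \left(2^{n^2}(n+1)!\right)^{-1}$. Moreover, the convex body $2^n\mathcal{C}(q)$ contains a basis of $\mathbb{Z}[T]_{\le n}$ over $\mathbb{Z}$.
   Context: $\mathbb{R}[T]_{\le n}$ denotes the real vector space of polynomials in $\mathbb{R}[T]$ of degree $\le n$, and $\mathbb{Z}[T]_{\le n}$ its subgroup of polynomials with integer coefficients (a lattice of rank $n+1$, identified with $\mathbb{Z}^{n+1}$ via coefficients). For $P \in \mathbb{R}[T]$ and $k\ge0$, $P^{[k]}(\xi) = P^{(k)}(\xi)/k!$ is the $k$-th divided derivative (the coefficient of $(T-\xi)^k$ in the Taylor expansion of $P$ at $\xi$). For an integer $q\ge1$, $\mathcal{C}(q)$ is the convex body of all $P \in \mathbb{R}[T]_{\le n}$ with $|P^{[k]}(\xi)| \le q^{2k-n}$ for $0\le k\le n$. The successive minima $\lambda_1\le\dots\le\lambda_{n+1}$ of a convex body $\mathcal{C}$ with respect to a lattice $\Lambda$ are defined by: $\lambda_i$ is the smallest $\lambda>0$ such that $\lambda\mathcal{C}$ contains $i$ linearly independent elements of $\Lambda$. *)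

theory Defs
  imports "HOL-Analysis.Analysis" "HOL-Computational_Algebra.Polynomial"
begin

fun cf_rem :: "real \<Rightarrow> nat \<Rightarrow> real" where
  "cf_rem x 0 = x"
| "cf_rem x (Suc k) = 1 / (cf_rem x k - of_int \<lfloor>cf_rem x k\<rfloor>)"

definition cf_pq :: "real \<Rightarrow> nat \<Rightarrow> int" where
  "cf_pq x k = \<lfloor>cf_rem x k\<rfloor>"

text \<open>Denominators of convergents: q_(-1) = 0, q_0 = 1, q_(k+1) = a_(k+1) q_k + q_(k-1).\<close>
fun cf_den :: "real \<Rightarrow> nat \<Rightarrow> int" where
  "cf_den x 0 = 1"
| "cf_den x (Suc 0) = cf_pq x 1"
| "cf_den x (Suc (Suc k)) = cf_pq x (Suc (Suc k)) * cf_den x (Suc k) + cf_den x k"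

definition convergent_denominator :: "real \<Rightarrow> nat \<Rightarrow> bool" where
  "convergent_denominator x q \<longleftrightarrow> (\<exists>k. int q = cf_den x k)"

definition divided_deriv :: "nat \<Rightarrow> real poly \<Rightarrow> real \<Rightarrow> real" where
  "divided_deriv k P x = poly ((pderiv ^^ k) P) x / fact k"

definition int_polys :: "nat \<Rightarrow> real poly set" where
  "int_polys n = {P. degree P \<le> n \<and> (\<forall>i. coeff P i \<in> \<int>)}"

definition conv_body :: "nat \<Rightarrow> real \<Rightarrow> nat \<Rightarrow> real poly set" where
  "conv_body n x q = {P. degree P \<le> n \<and>
      (\<forall>k\<le>n. \<bar>divided_deriv k P x\<bar> \<le> real q powi (2 * int k - int n))}"

definition scale_body :: "real \<Rightarrow> real poly set \<Rightarrow> real poly set" where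
  "scale_body l C = (\<lambda>P. smult l P) ` C"

definition real_lin_indep :: "real poly set \<Rightarrow> bool" where
  "real_lin_indep S \<longleftrightarrow> finite S \<and>
     (\<forall>c::real poly \<Rightarrow> real. (\<Sum>p\<in>S. smult (c p) p) = 0 \<longrightarrow> (\<forall>p\<in>S. c p = 0))"

definition succ_min :: "real poly set \<Rightarrow> real poly set \<Rightarrow> nat \<Rightarrow> real" where
  "succ_min L C i = Inf {l. l > 0 \<and> (\<exists>S. S \<subseteq> L \<inter> scale_body l C \<and> card S = i \<and> real_lin_indep S)}"

definition is_Z_basis :: "real poly set \<Rightarrow> real poly set \<Rightarrow> bool" where
  "is_Z_basis B L \<longleftrightarrow> finite B \<and> B \<subseteq> L \<and>
     (\<forall>c::real poly \<Rightarrow> int. (\<Sum>p\<in>B. smult (of_int (c p)) p) = 0 \<longrightarrow> (\<forall>p\<in>B. c p = 0)) \<and>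
     (\<forall>P\<in>L. \<exists>c::real poly \<Rightarrow> int. P = (\<Sum>p\<in>B. smult (of_int (c p)) p))"

end

theory Submission
  imports Defs
begin


lemma higher_pderiv_pcompose_lin:
  "(pderiv ^^ k) (pcompose P [:x, 1:]) = pcompose ((pderiv ^^ k) P) [:x, 1::real:]"
  by (induction k) (simp_all add: pderiv_pcompose pderiv_pCons)

lemma divided_deriv_coeff:
  "divided_deriv k P x = coeff (pcompose P [:x, 1:]) k"
proof -
  have "coeff ((pderiv ^^ k) (pcompose P [:x, 1:])) 0 = pochhammer 1 k * coeff (pcompose P [:x, 1:]) k"
    by (simp add: coeff_higher_pderiv)
  also have "pochhammer 1 k = (fact k :: real)" by (simp add: pochhammer_fact)
  finally have "coeff (pcompose P [:x, 1:]) k = coeff ((pderiv ^^ k) (pcompose P [:x, 1:])) 0 / fact k"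
    by simp
  also have "coeff ((pderiv ^^ k) (pcompose P [:x, 1:])) 0 = poly ((pderiv ^^ k) P) x"
    by (simp add: higher_pderiv_pcompose_lin poly_0_coeff_0[symmetric] poly_pcompose)
  finally show ?thesis by (simp add: divided_deriv_def)
qed




fun cA :: "real \<Rightarrow> nat \<Rightarrow> int" where
  "cA x 0 = 0" | "cA x (Suc 0) = 1"
| "cA x (Suc (Suc k)) = cf_pq x k * cA x (Suc k) + cA x k"

fun cB :: "real \<Rightarrow> nat \<Rightarrow> int" where
  "cB x 0 = 1" | "cB x (Suc 0) = 0"
| "cB x (Suc (Suc k)) = cf_pq x k * cB x (Suc k) + cB x k"

lemma cf_rem_irr: assumes "x \<notin> \<rat>" shows "cf_rem x k \<notin> \<rat>"
proof (induction k)
  case 0 then show ?case using assms by simp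
next
  case (Suc k)
  let ?y = "cf_rem x k"
  show ?case
  proof
    assume "cf_rem x (Suc k) \<in> \<rat>"
    hence "1 / (?y - of_int \<lfloor>?y\<rfloor>) \<in> \<rat>" by simp
    hence "1 / (1 / (?y - of_int \<lfloor>?y\<rfloor>)) \<in> \<rat>" by (rule Rats_divide[OF Rats_1])
    hence "?y - of_int \<lfloor>?y\<rfloor> \<in> \<rat>" by simp
    hence "?y - of_int \<lfloor>?y\<rfloor> + of_int \<lfloor>?y\<rfloor> \<in> \<rat>" by (intro Rats_add) auto
    with Suc show False by simp
  qed
qed

lemma cf_rem_gt1: assumes "x \<notin> \<rat>" shows "cf_rem x (Suc k) > 1"
proof -
  let ?y = "cf_rem x k"
  have "?y \<noteq> of_int \<lfloor>?y\<rfloor>" using cf_rem_irr[OF assms, of k] by (metis Rats_of_int)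
  hence "0 < ?y - of_int \<lfloor>?y\<rfloor>" by linarith
  moreover have "?y - of_int \<lfloor>?y\<rfloor> < 1" by linarith
  ultimately show ?thesis by simp
qed

lemma cf_pq_ge1: assumes "x \<notin> \<rat>" shows "cf_pq x (Suc k) \<ge> 1"
  using cf_rem_gt1[OF assms, of k] unfolding cf_pq_def by linarith

lemma cf_rem_eq: "cf_rem x k = of_int (cf_pq x k) + 1 / cf_rem x (Suc k)"
  by (simp add: cf_pq_def)

lemma cB_mono: assumes "x \<notin> \<rat>" shows "0 \<le> cB x k \<and> (k \<ge> 1 \<longrightarrow> cB x k \<le> cB x (Suc k))"
proof (induction k rule: nat_less_induct)
  case (1 k)
  show ?case
  proof (cases k)
    case 0 then show ?thesis by simp
  next
    case (Suc j)
    note IH = "1"[rule_format, of j]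
    show ?thesis
    proof (cases j)
      case 0 then show ?thesis using Suc by simp
    next
      case (Suc i)
      have a: "cf_pq x j \<ge> 1" using Suc cf_pq_ge1[OF assms, of i] by simp
      have nn: "cB x (Suc j) \<ge> 0" using IH `k = Suc j` Suc by auto
      have "cf_pq x j * cB x (Suc j) \<ge> cB x (Suc j)" using a nn by (simp add: mult_le_cancel_right1)
      then show ?thesis using IH `k = Suc j` nn by simp
    qed
  qed
qed

lemma cf_den_cB: "cf_den x m = cB x (m + 2)"
  by (induction x m rule: cf_den.induct) (simp_all add: numeral_eq_Suc)

lemma cB_pos: assumes "x \<notin> \<rat>" shows "cB x (Suc (Suc k)) \<ge> 1"
proof (induction k)
  case 0 then show ?case by simp
next
  case (Suc k) then show ?case using cB_mono[OF assms, of "Suc (Suc k)"] by simp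
qed

lemma cf_inv_step:
  fixes x z a A0 A1 B0 B1 :: real
  assumes z: "z > 0" and IH: "x * (B1 * (a + 1 / z) + B0) = A1 * (a + 1 / z) + A0"
  shows "x * ((a * B1 + B0) * z + B1) = (a * A1 + A0) * z + A1"
proof -
  have eB: "B1 * (a + 1 / z) + B0 = ((a * B1 + B0) * z + B1) / z" using z by (simp add: field_simps)
  have eA: "A1 * (a + 1 / z) + A0 = ((a * A1 + A0) * z + A1) / z" using z by (simp add: field_simps)
  have "x * (((a * B1 + B0) * z + B1) / z) = ((a * A1 + A0) * z + A1) / z"
    using IH unfolding eB eA .
  hence "x * ((a * B1 + B0) * z + B1) / z = ((a * A1 + A0) * z + A1) / z" by simp
  thus ?thesis using z by (simp add: divide_cancel_right)
qed

lemma cf_inv: assumes "x \<notin> \<rat>"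
  shows "x * (cB x (Suc k) * cf_rem x k + cB x k) = cA x (Suc k) * cf_rem x k + cA x k"
proof (induction k)
  case 0 then show ?case by simp
next
  case (Suc k)
  let ?z = "cf_rem x (Suc k)" let ?a = "real_of_int (cf_pq x k)"
  have z1: "?z > 1" by (rule cf_rem_gt1[OF assms])
  hence z: "?z > 0" by linarith
  have e: "cf_rem x k = ?a + 1 / ?z" by (rule cf_rem_eq)
  have "x * ((?a * cB x (Suc k) + cB x k) * ?z + cB x (Suc k)) = (?a * cA x (Suc k) + cA x k) * ?z + cA x (Suc k)"
    by (rule cf_inv_step[OF z]) (unfold e[symmetric], rule Suc.IH)
  then show ?case by (simp del: cf_rem.simps)
qed

lemma cf_det: "cA x (Suc k) * cB x k - cA x k * cB x (Suc k) = (-1) ^ k"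
  by (induction k) (simp_all add: algebra_simps)

lemma cf_err: fixes x :: real assumes "x \<notin> \<rat>"
  shows "\<bar>real_of_int (cB x (Suc k)) * x - cA x (Suc k)\<bar> * (cB x (Suc k) * cf_rem x k + cB x k) = 1"
proof -
  have "(real_of_int (cB x (Suc k)) * x - cA x (Suc k)) * (cB x (Suc k) * cf_rem x k + cB x k)
      = cB x (Suc k) * (x * (cB x (Suc k) * cf_rem x k + cB x k)) - cA x (Suc k) * (cB x (Suc k) * cf_rem x k + cB x k)"
    by (simp add: algebra_simps)
  also have "\<dots> = cB x (Suc k) * (cA x (Suc k) * cf_rem x k + cA x k) - cA x (Suc k) * (cB x (Suc k) * cf_rem x k + cB x k)"
    by (simp add: cf_inv[OF assms])
  also have "\<dots> = - real_of_int (cA x (Suc k) * cB x k - cA x k * cB x (Suc k))"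
    by (simp add: algebra_simps)
  also have "\<dots> = - ((-1) ^ k)" by (simp add: cf_det)
  finally have "\<bar>(real_of_int (cB x (Suc k)) * x - cA x (Suc k)) * (cB x (Suc k) * cf_rem x k + cB x k)\<bar> = 1"
    by simp
  moreover have "cB x (Suc k) * cf_rem x k + cB x k \<ge> 0"
  proof (cases k)
    case 0 then show ?thesis by simp
  next
    case (Suc j)
    have "cf_rem x k > 1" using Suc cf_rem_gt1[OF assms] by simp
    moreover have "cB x (Suc k) \<ge> 0" "cB x k \<ge> 0" using cB_mono[OF assms] by auto
    ultimately show ?thesis by simp
  qed
  ultimately show ?thesis by (simp add: abs_mult)
qed

lemma conv_data: fixes x :: real
  assumes irr: "x \<notin> \<rat>" and cd: "convergent_denominator x q"
  shows "\<exists>p r s :: int. q \<ge> 1 \<and> 0 \<le> r \<and> r \<le> int q \<and>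
     \<bar>real q * x - real_of_int p\<bar> \<le> 1 / real q \<and> \<bar>real_of_int r * x - real_of_int s\<bar> \<le> 1 / real q \<and> \<bar>p * r - int q * s\<bar> = 1"
proof -
  obtain m where qm: "int q = cB x (m + 2)" using cd cf_den_cB unfolding convergent_denominator_def by metis
  define k where "k = Suc m"
  have qk: "int q = cB x (Suc k)" using qm by (simp add: k_def)
  have q1: "int q \<ge> 1" using qm cB_pos[OF irr, of m] by (simp add: numeral_eq_Suc)
  hence qpos: "real q > 0" by simp
  have Bk: "cB x k \<ge> 0" "cB x k \<le> cB x (Suc k)" using cB_mono[OF irr, of k] k_def by auto
  have rq: "real_of_int (cB x (Suc k)) = real q" using qk by (metis of_int_of_nat_eq)
  have zk: "cf_rem x k > 1" using cf_rem_gt1[OF irr] k_def by simp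
  have D1: "real q \<le> cB x (Suc k) * cf_rem x k + cB x k"
  proof -
    have "real q * 1 \<le> real q * cf_rem x k" using zk qpos by simp
    thus ?thesis using rq Bk by simp
  qed
  have e1: "\<bar>real q * x - cA x (Suc k)\<bar> \<le> 1 / real q"
  proof -
    have eq: "\<bar>real q * x - cA x (Suc k)\<bar> * (cB x (Suc k) * cf_rem x k + cB x k) = 1"
      using cf_err[OF irr, of k] rq by simp
    have "\<bar>real q * x - cA x (Suc k)\<bar> * real q \<le> 1"
      using eq D1 by (metis abs_ge_zero mult_left_mono)
    thus ?thesis using qpos by (simp add: field_simps)
  qed
  have D2: "real q \<le> cB x (Suc m) * cf_rem x m + cB x m"
  proof -
    have "cB x (Suc k) = cf_pq x m * cB x (Suc m) + cB x m" by (simp add: k_def)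
    moreover have "real_of_int (cf_pq x m) \<le> cf_rem x m" unfolding cf_pq_def by linarith
    moreover have "cB x (Suc m) \<ge> 0" using cB_mono[OF irr] by auto
    ultimately have "real_of_int (cB x (Suc k)) \<le> cB x (Suc m) * cf_rem x m + cB x m"
      by (simp add: mult_right_mono mult.commute)
    thus ?thesis using rq by simp
  qed
  have e2: "\<bar>real_of_int (cB x k) * x - cA x k\<bar> \<le> 1 / real q"
  proof -
    have eq: "\<bar>real_of_int (cB x k) * x - cA x k\<bar> * (cB x (Suc m) * cf_rem x m + cB x m) = 1"
      using cf_err[OF irr, of m] k_def by simp
    have "\<bar>real_of_int (cB x k) * x - cA x k\<bar> * real q \<le> 1"
      using eq D2 by (metis abs_ge_zero mult_left_mono)
    thus ?thesis using qpos by (simp add: field_simps)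
  qed
  have det: "\<bar>cA x (Suc k) * cB x k - int q * cA x k\<bar> = 1"
    using cf_det[of x k] qk by (simp add: mult.commute)
  have Bk2: "cB x k \<le> int q" using Bk(2) qk by simp
  have q1': "q \<ge> 1" using q1 by simp
  show ?thesis using q1' Bk(1) Bk2 e1 e2 det by blast
qed




definition ef :: "real poly \<Rightarrow> real poly \<Rightarrow> nat \<Rightarrow> real poly \<Rightarrow> real poly" where
  "ef u v m g = (\<Sum>j\<le>m. smult (coeff g j) (u ^ (m - j) * v ^ j))"

lemma smult_sum_r: "smult c (\<Sum>i\<in>A. f i) = (\<Sum>i\<in>A. smult c (f i))"
  by (induction A rule: infinite_finite_induct) (simp_all add: smult_add_right)

lemma deg_lin_pow: "degree ([:a, b::real:] ^ k) \<le> k"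
proof (induction k)
  case (Suc k)
  have "degree ([:a, b:] * [:a, b:] ^ k) \<le> degree [:a, b:] + degree ([:a, b::real:] ^ k)"
    by (rule degree_mult_le)
  moreover have "degree [:a, b::real:] \<le> 1" by simp
  ultimately show ?case using Suc by simp
qed simp

lemma ef_add: "ef u v m (f + g) = ef u v m f + ef u v m g"
  by (simp add: ef_def sum.distrib smult_add_left)

lemma ef_diff: "ef u v m (f - g) = ef u v m f - ef u v m g"
  by (simp add: ef_def sum_subtractf smult_diff_left)

lemma ef_smult: "ef u v m (smult c f) = smult c (ef u v m f)"
  by (simp add: ef_def smult_sum_r)

lemma ef_0[simp]: "ef u v m 0 = 0"
  by (simp add: ef_def)

lemma ef_sum: "ef u v m (\<Sum>i\<in>A. f i) = (\<Sum>i\<in>A. ef u v m (f i))"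
  by (induction A rule: infinite_finite_induct) (simp_all add: ef_add)

lemma ef_monom: "i \<le> m \<Longrightarrow> ef u v m (monom c i) = smult c (u ^ (m - i) * v ^ i)"
  unfolding ef_def by (simp add: if_distrib[of "\<lambda>a. smult a _"] sum.delta cong: if_cong)

lemma ef_mult_lin:
  assumes "degree g \<le> m"
  shows "ef u v (Suc m) (g * [:a, b:]) = ef u v m g * (smult a u + smult b v)"
proof -
  have g: "g * [:a, b:] = smult a g + pCons 0 (smult b g)" by simp
  have 1: "ef u v (Suc m) (smult a g) = smult a (ef u v m g) * u"
  proof -
    have "ef u v (Suc m) (smult a g) = (\<Sum>j\<le>m. smult (a * coeff g j) (u ^ (Suc m - j) * v ^ j))"
      using assms by (simp add: ef_def coeff_eq_0)
    also have "\<dots> = (\<Sum>j\<le>m. smult (a * coeff g j) (u ^ (m - j) * v ^ j) * u)"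
      by (intro sum.cong refl) (simp add: Suc_diff_le algebra_simps)
    finally show ?thesis by (simp add: ef_def sum_distrib_right smult_sum_r mult_smult_left)
  qed
  have 2: "ef u v (Suc m) (pCons 0 (smult b g)) = smult b (ef u v m g) * v"
  proof -
    have "ef u v (Suc m) (pCons 0 (smult b g)) = (\<Sum>i\<le>m. smult (b * coeff g i) (u ^ (m - i) * v ^ Suc i))"
      unfolding ef_def by (subst sum.atMost_Suc_shift) simp
    also have "\<dots> = (\<Sum>i\<le>m. smult (b * coeff g i) (u ^ (m - i) * v ^ i) * v)"
      by (intro sum.cong refl) (simp add: algebra_simps)
    finally show ?thesis by (simp add: ef_def sum_distrib_right smult_sum_r mult_smult_left)
  qed
  show ?thesis unfolding g ef_add 1 2 by (simp add: algebra_simps)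
qed

lemma degree_lin_pow: "degree ([:a, b:] ^ k * [:c, d:] ^ l :: real poly) \<le> k + l"
proof -
  have "degree ([:a, b:] ^ k :: real poly) \<le> k" by (rule deg_lin_pow)
  moreover have "degree ([:c, d:] ^ l :: real poly) \<le> l" by (rule deg_lin_pow)
  ultimately show ?thesis using degree_mult_le[of "[:a, b:] ^ k" "[:c, d:] ^ l"] by simp
qed

lemma ef_pow2:
  "ef u v (k + l) ([:a, b:] ^ k * [:c, d:] ^ l) = (smult a u + smult b v) ^ k * (smult c u + smult d v) ^ l"
proof (induction k)
  case 0
  show ?case
  proof (induction l)
    case 0 then show ?case by (simp add: ef_def)
  next
    case (Suc l)
    have "degree ([:c, d:] ^ l :: real poly) \<le> l" by (rule deg_lin_pow)
    hence "ef u v (Suc l) ([:c, d:] ^ l * [:c, d:]) = ef u v l ([:c, d:] ^ l) * (smult c u + smult d v)"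
      by (rule ef_mult_lin)
    then show ?case using Suc by (simp add: power_Suc2 del: power_Suc mult_pCons_right)
  qed
next
  case (Suc k)
  have eq: "[:a, b:] ^ Suc k * [:c, d:] ^ l = ([:a, b:] ^ k * [:c, d:] ^ l) * [:a, b:]"
    by (simp add: algebra_simps)
  have "ef u v (Suc (k + l)) (([:a, b:] ^ k * [:c, d:] ^ l) * [:a, b:]) = ef u v (k + l) ([:a, b:] ^ k * [:c, d:] ^ l) * (smult a u + smult b v)"
    by (rule ef_mult_lin[OF degree_lin_pow])
  then show ?case using Suc unfolding eq by (simp del: power_Suc mult_pCons_right) (simp add: algebra_simps)
qed

lemma ef_indep:
  fixes a1 b1 a2 b2 :: real
  assumes det: "a1 * b2 - a2 * b1 \<noteq> 0" and z: "ef [:a1, b1:] [:a2, b2:] n g = 0" and dg: "degree g \<le> n"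
  shows "g = 0"
proof -
  define u where "u = [:a1, b1:]" define v where "v = [:a2, b2:]"
  define h where "h = (\<Sum>j\<le>n. monom (coeff g j) (n - j))"
  have v0: "v \<noteq> 0" using det by (auto simp: v_def)
  define D where "D = {t. poly v t \<noteq> 0}"
  have "finite {t. poly v t = 0}" using poly_roots_finite[OF v0] .
  hence infD: "infinite D"
  proof -
    assume fin: "finite {t. poly v t = 0}"
    have U: "UNIV = D \<union> {t. poly v t = 0}" by (auto simp: D_def)
    show "infinite D"
    proof
      assume "finite D"
      hence "finite (D \<union> {t. poly v t = 0})" using fin by simp
      hence "finite (UNIV :: real set)" by (simp only: U)
      thus False using infinite_UNIV_char_0 by blast
    qed
  qed
  define f where "f t = poly u t / poly v t" for t
  have inj: "inj_on f D"
  proof (rule inj_onI)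
    fix t1 t2 assume t1: "t1 \<in> D" and t2: "t2 \<in> D" and e: "f t1 = f t2"
    have v1: "poly v t1 \<noteq> 0" and v2: "poly v t2 \<noteq> 0" using t1 t2 by (auto simp: D_def)
    have "poly u t1 / poly v t1 = poly u t2 / poly v t2" using e by (simp add: f_def)
    hence "poly u t1 * poly v t2 = poly u t2 * poly v t1"
      using v1 v2 by (simp add: frac_eq_eq)
    hence "(a1 * b2 - a2 * b1) * (t2 - t1) = 0"
      by (simp add: u_def v_def algebra_simps)
    thus "t1 = t2" using det by simp
  qed
  have roots: "f ` D \<subseteq> {z. poly h z = 0}"
  proof
    fix z assume "z \<in> f ` D"
    then obtain t where t: "t \<in> D" "z = f t" by auto
    have "0 = poly (ef u v n g) t" using z by (simp add: u_def v_def)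
    also have "\<dots> = (\<Sum>j\<le>n. coeff g j * (poly u t ^ (n - j) * poly v t ^ j))"
      by (simp add: ef_def poly_sum)
    also have "\<dots> = (\<Sum>j\<le>n. poly v t ^ n * (coeff g j * z ^ (n - j)))"
    proof (intro sum.cong refl)
      fix j assume "j \<in> {..n}"
      hence h1: "poly v t ^ n = poly v t ^ j * poly v t ^ (n - j)" by (simp flip: power_add)
      have h2: "z ^ (n - j) * poly v t ^ (n - j) = poly u t ^ (n - j)"
        using t by (simp add: f_def D_def power_divide)
      show "coeff g j * (poly u t ^ (n - j) * poly v t ^ j) = poly v t ^ n * (coeff g j * z ^ (n - j))"
      proof -
        have "coeff g j * (poly u t ^ (n - j) * poly v t ^ j) = coeff g j * ((z ^ (n - j) * poly v t ^ (n - j)) * poly v t ^ j)"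
          using h2 by simp
        also have "\<dots> = (poly v t ^ j * poly v t ^ (n - j)) * (coeff g j * z ^ (n - j))"
          by (simp only: mult_ac)
        finally show ?thesis using h1 by simp
      qed
    qed
    also have "\<dots> = poly v t ^ n * poly h z"
      by (simp add: h_def poly_sum poly_monom sum_distrib_left)
    finally show "z \<in> {z. poly h z = 0}" using t by (simp add: D_def)
  qed
  have "infinite (f ` D)" using infD inj finite_image_iff by blast
  hence "infinite {z. poly h z = 0}" using roots finite_subset by blast
  hence h0: "h = 0" using poly_roots_finite by blast
  show ?thesis
  proof (rule poly_eqI)
    fix i
    show "coeff g i = coeff 0 i"
    proof (cases "i \<le> n")
      case True
      have "coeff h (n - i) = (\<Sum>j\<le>n. if j = i then coeff g j else 0)"
        unfolding h_def coeff_sum coeff_monom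
        by (intro sum.cong refl) (use True in auto)
      also have "\<dots> = coeff g i" using True by simp
      finally show ?thesis using h0 by simp
    next
      case False then show ?thesis using dg by (simp add: coeff_eq_0)
    qed
  qed
qed

lemma lin_bound_k:
  fixes Q :: real
  assumes Q: "Q > 0" and f: "\<And>k. \<bar>coeff f k\<bar> \<le> 2 ^ m * Q powi (2 * int k - int m)"
    and a: "\<bar>a\<bar> \<le> 1 / Q" and b: "\<bar>b\<bar> \<le> Q"
  shows "\<bar>coeff (f * [:a, b:]) k\<bar> \<le> 2 ^ Suc m * Q powi (2 * int k - int (Suc m))"
proof -
  define E where "E = Q powi (2 * int k - int (Suc m))"
  have Epos: "E > 0" using Q by (simp add: E_def)
  have e1: "Q powi (2 * int k - int m) = Q * E"
    using Q power_int_add[of Q 1 "2 * int k - int (Suc m)"] by (simp add: E_def)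
  have c: "coeff (f * [:a, b:]) k = a * coeff f k + (if k = 0 then 0 else b * coeff f (k - 1))"
    by (cases k) (simp_all add: mult.commute)
  have t1: "\<bar>a * coeff f k\<bar> \<le> 2 ^ m * E"
  proof -
    have "\<bar>a * coeff f k\<bar> \<le> (1 / Q) * (2 ^ m * (Q * E))"
      unfolding abs_mult using a f[of k] e1 Q by (intro mult_mono) auto
    thus ?thesis using Q by simp
  qed
  have t2: "k \<noteq> 0 \<Longrightarrow> \<bar>b * coeff f (k - 1)\<bar> \<le> 2 ^ m * E"
  proof -
    assume k: "k \<noteq> 0"
    have e2: "E = Q * Q powi (2 * int (k - 1) - int m)"
      using Q power_int_add[of Q 1 "2 * int (k - 1) - int m"] k by (simp add: E_def of_nat_diff algebra_simps)
    have "\<bar>b * coeff f (k - 1)\<bar> \<le> Q * (2 ^ m * Q powi (2 * int (k - 1) - int m))"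
      unfolding abs_mult using b f[of "k - 1"] by (intro mult_mono) auto
    thus ?thesis using e2 by (simp add: algebra_simps)
  qed
  have "\<bar>coeff (f * [:a, b:]) k\<bar> \<le> 2 ^ m * E + 2 ^ m * E"
  proof (cases "k = 0")
    case True
    have "0 \<le> 2 ^ m * E" using Epos by simp
    moreover have "\<bar>coeff (f * [:a, b:]) k\<bar> = \<bar>a * coeff f k\<bar>" using True c by simp
    ultimately show ?thesis using t1 by linarith
  next
    case False
    have "\<bar>coeff (f * [:a, b:]) k\<bar> \<le> \<bar>a * coeff f k\<bar> + \<bar>b * coeff f (k - 1)\<bar>"
      unfolding c using False abs_triangle_ineq by simp
    then show ?thesis using t1 t2[OF False] by linarith
  qed
  moreover have "(2::real) ^ Suc m * E = 2 ^ m * E + 2 ^ m * E" by simp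
  ultimately show ?thesis unfolding E_def by linarith
qed

lemma lin_pow_bound_k:
  fixes Q :: real
  assumes Q: "Q > 0" and f: "\<And>k. \<bar>coeff f k\<bar> \<le> 2 ^ m * Q powi (2 * int k - int m)"
    and a: "\<bar>a\<bar> \<le> 1 / Q" and b: "\<bar>b\<bar> \<le> Q"
  shows "\<bar>coeff (f * [:a, b:] ^ j) k\<bar> \<le> 2 ^ (m + j) * Q powi (2 * int k - int (m + j))"
proof (induction j arbitrary: k)
  case 0 then show ?case using f by simp
next
  case (Suc j)
  have "\<bar>coeff ((f * [:a, b:] ^ j) * [:a, b:]) k\<bar> \<le> 2 ^ Suc (m + j) * Q powi (2 * int k - int (Suc (m + j)))"
    by (rule lin_bound_k[OF Q Suc.IH a b])
  thus ?case by (simp add: algebra_simps)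
qed

lemma one_bound_k:
  fixes Q :: real assumes "Q > 0"
  shows "\<bar>coeff (1 :: real poly) k\<bar> \<le> 2 ^ 0 * Q powi (2 * int k - int 0)"
  using assms by (cases k) auto

lemma lin_bound:
  fixes f :: "real poly"
  assumes f: "\<And>k. \<bar>coeff f k\<bar> \<le> M" and a: "\<bar>a\<bar> \<le> A" and b: "\<bar>b\<bar> \<le> B"
  shows "\<bar>coeff (f * [:a, b:]) k\<bar> \<le> (A + B) * M"
proof -
  have M: "M \<ge> 0" by (rule order_trans[OF abs_ge_zero f])
  have c: "coeff (f * [:a, b:]) k = a * coeff f k + (if k = 0 then 0 else b * coeff f (k - 1))"
    by (cases k) (simp_all add: mult.commute)
  have t1: "\<bar>a * coeff f k\<bar> \<le> A * M" unfolding abs_mult using a f[of k] by (intro mult_mono) auto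
  have t2: "\<bar>b * coeff f (k - 1)\<bar> \<le> B * M" unfolding abs_mult using b f[of "k-1"] by (intro mult_mono) auto
  have "B * M \<ge> 0" using b M by (intro mult_nonneg_nonneg) auto
  have "A * M \<ge> 0" using a M by (intro mult_nonneg_nonneg) auto
  have "\<bar>coeff (f * [:a, b:]) k\<bar> \<le> A * M + B * M"
  proof (cases "k = 0")
    case True
    have "\<bar>coeff (f * [:a, b:]) k\<bar> = \<bar>a * coeff f k\<bar>" using True c by simp
    then show ?thesis using t1 `B * M \<ge> 0` by linarith
  next
    case False
    have "\<bar>coeff (f * [:a, b:]) k\<bar> \<le> \<bar>a * coeff f k\<bar> + \<bar>b * coeff f (k - 1)\<bar>"
      unfolding c using False abs_triangle_ineq by simp
    then show ?thesis using t1 t2 by linarith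
  qed
  thus ?thesis by (simp add: algebra_simps)
qed

lemma lin_pow_bound:
  fixes f :: "real poly"
  assumes f: "\<And>k. \<bar>coeff f k\<bar> \<le> M" and a: "\<bar>a\<bar> \<le> A" and b: "\<bar>b\<bar> \<le> B"
  shows "\<bar>coeff (f * [:a, b:] ^ j) k\<bar> \<le> (A + B) ^ j * M"
proof (induction j arbitrary: k)
  case 0 then show ?case using f by simp
next
  case (Suc j)
  have "\<bar>coeff ((f * [:a, b:] ^ j) * [:a, b:]) k\<bar> \<le> (A + B) * ((A + B) ^ j * M)"
    by (rule lin_bound[OF Suc.IH a b])
  thus ?case by (simp add: algebra_simps)
qed

lemma pcompose_power': "pcompose (p ^ k) r = (pcompose p r) ^ k"
  by (induction k) (simp_all add: pcompose_1 pcompose_mult)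

lemma pcompose_ef: "pcompose (ef u v m g) r = ef (pcompose u r) (pcompose v r) m g"
  by (simp add: ef_def pcompose_sum pcompose_smult pcompose_mult pcompose_power')




definition intp :: "real poly \<Rightarrow> bool" where "intp g \<longleftrightarrow> (\<forall>i. coeff g i \<in> \<int>)"

lemma intp_lin: "a \<in> \<int> \<Longrightarrow> b \<in> \<int> \<Longrightarrow> intp [:a, b:]"
  unfolding intp_def by (auto simp: coeff_pCons split: nat.split)

lemma intp_mult: "intp f \<Longrightarrow> intp g \<Longrightarrow> intp (f * g)"
  unfolding intp_def coeff_mult by (auto intro!: Ints_sum Ints_mult)

lemma intp_1: "intp 1"
  unfolding intp_def by (auto simp: coeff_1)

lemma intp_power: "intp f \<Longrightarrow> intp (f ^ k)"
  by (induction k) (simp_all add: intp_1 intp_mult)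

lemma intp_smult: "c \<in> \<int> \<Longrightarrow> intp f \<Longrightarrow> intp (smult c f)"
  unfolding intp_def by auto

lemma intp_sum: "(\<And>i. i \<in> A \<Longrightarrow> intp (f i)) \<Longrightarrow> intp (\<Sum>i\<in>A. f i)"
  unfolding intp_def coeff_sum by (auto intro!: Ints_sum)

lemma degree_sum_le': "(\<And>i. i \<in> A \<Longrightarrow> degree (f i) \<le> n) \<Longrightarrow> degree (\<Sum>i\<in>A. f i) \<le> n"
  by (induction A rule: infinite_finite_induct) (auto intro: order.trans[OF degree_add_le])

lemma divided_deriv_smult: "divided_deriv k (smult c P) x = c * divided_deriv k P x"
  by (simp add: divided_deriv_coeff pcompose_smult)

locale cfd =
  fixes p r s :: int and q :: nat
  assumes q1: "q \<ge> 1" and det: "\<bar>p * r - int q * s\<bar> = 1"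
begin

definition "ee = real_of_int (p * r - int q * s)"

lemma ee2: "ee * ee = 1"
proof -
  define e where "e = p * r - int q * s"
  have "e = 1 \<or> e = -1" using det unfolding e_def by linarith
  moreover have "ee = of_int e" unfolding ee_def e_def ..
  ultimately show ?thesis by auto
qed

lemma ee_abs: "\<bar>ee\<bar> = 1"
  using det unfolding ee_def by (metis of_int_1 of_int_abs)

lemma ee_Ints: "ee \<in> \<int>" by (simp add: ee_def)

definition uu :: "real \<Rightarrow> real poly" where "uu x = [:real q * x - of_int p, real q:]"
definition vv :: "real \<Rightarrow> real poly" where "vv x = [:of_int r * x - of_int s, of_int r:]"
definition L1 :: "real \<Rightarrow> real poly" where
  "L1 x = [:ee * (of_int r * x - of_int s), - ee * (real q * x - of_int p):]"
definition L2 :: "real poly" where "L2 = [:- ee * of_int r, ee * real q:]"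
definition Gen :: "nat \<Rightarrow> real \<Rightarrow> real poly \<Rightarrow> real poly" where
  "Gen n x P = (\<Sum>k\<le>n. smult (coeff P k) (L1 x ^ k * L2 ^ (n - k)))"
definition Qf :: "nat \<Rightarrow> nat \<Rightarrow> real poly" where "Qf n j = uu 0 ^ (n - j) * vv 0 ^ j"

lemma ee_rel: "ee = of_int p * of_int r - real q * of_int s" by (simp add: ee_def)

lemma L1_form: "smult (ee * (of_int r * x - of_int s)) (uu x) + smult (- ee * (real q * x - of_int p)) (vv x) = [:0, 1:]"
proof -
  have "ee * (of_int r * x - of_int s) * (real q * x - of_int p) + - ee * (real q * x - of_int p) * (of_int r * x - of_int s) = 0"
    by (simp add: algebra_simps)
  moreover have "ee * (of_int r * x - of_int s) * real q + - ee * (real q * x - of_int p) * of_int r = ee * ee"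
    by (subst (3) ee_rel) (simp add: algebra_simps)
  ultimately show ?thesis by (simp add: uu_def vv_def ee2)
qed

lemma L2_form: "smult (- ee * of_int r) (uu x) + smult (ee * real q) (vv x) = 1"
proof -
  have "- ee * of_int r * (real q * x - of_int p) + ee * real q * (of_int r * x - of_int s) = ee * ee"
    by (subst (3) ee_rel) (simp add: algebra_simps)
  moreover have "- ee * of_int r * real q + ee * real q * of_int r = 0" by simp
  ultimately show ?thesis by (simp add: uu_def vv_def ee2 one_pCons)
qed

lemma degree_Gen: "degree (Gen n x P) \<le> n"
  unfolding Gen_def L1_def L2_def
  by (rule degree_sum_le') (auto intro: order.trans[OF degree_smult_le] order.trans[OF degree_lin_pow])

lemma expand:
  assumes "degree P \<le> n"
  shows "P = ef (uu x) (vv x) n (Gen n x P)"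
proof -
  have "P = (\<Sum>k\<le>n. monom (coeff P k) k)" using poly_as_sum_of_monoms'[OF assms] by simp
  also have "\<dots> = (\<Sum>k\<le>n. ef (uu x) (vv x) n (smult (coeff P k) (L1 x ^ k * L2 ^ (n - k))))"
  proof (intro sum.cong refl)
    fix k assume k: "k \<in> {..n}"
    have "ef (uu x) (vv x) (k + (n - k)) (L1 x ^ k * L2 ^ (n - k)) = [:0, 1:] ^ k * 1 ^ (n - k)"
      unfolding L1_def L2_def ef_pow2 L1_form L2_form ..
    hence "ef (uu x) (vv x) n (L1 x ^ k * L2 ^ (n - k)) = [:0, 1:] ^ k" using k by simp
    thus "monom (coeff P k) k = ef (uu x) (vv x) n (smult (coeff P k) (L1 x ^ k * L2 ^ (n - k)))"
      by (simp add: ef_smult monom_altdef)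
  qed
  also have "\<dots> = ef (uu x) (vv x) n (Gen n x P)" by (simp add: Gen_def ef_sum)
  finally show ?thesis .
qed

lemma indep:
  assumes "ef (uu x) (vv x) n g = 0" and "degree g \<le> n" shows "g = 0"
proof (rule ef_indep[OF _ _ assms(2)])
  show "(real q * x - of_int p) * of_int r - (of_int r * x - of_int s) * real q \<noteq> 0"
  proof -
    have "(real q * x - of_int p) * of_int r - (of_int r * x - of_int s) * real q = - ee"
      by (simp add: ee_rel algebra_simps)
    thus ?thesis using ee_abs by auto
  qed
  show "ef [:real q * x - of_int p, real q:] [:of_int r * x - of_int s, of_int r:] n g = 0"
    using assms(1) by (simp add: uu_def vv_def)
qed

lemma intp_Gen0: "intp P \<Longrightarrow> intp (Gen n 0 P)"
  unfolding Gen_def L1_def L2_def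
  by (intro intp_sum intp_smult intp_mult intp_power intp_lin)
     (auto simp: intp_def ee_Ints intro!: Ints_mult Ints_minus Ints_diff)

lemma shift_uu: "pcompose (uu 0) [:x, 1:] = uu x"
  by (simp add: uu_def pcompose_pCons algebra_simps)

lemma shift_vv: "pcompose (vv 0) [:x, 1:] = vv x"
  by (simp add: vv_def pcompose_pCons algebra_simps)

lemma shift_ef: "pcompose (ef (uu 0) (vv 0) n g) [:x, 1:] = ef (uu x) (vv x) n g"
  by (simp add: pcompose_ef shift_uu shift_vv)

lemma shift_Qf: "pcompose (Qf n j) [:x, 1:] = uu x ^ (n - j) * vv x ^ j"
  by (simp add: Qf_def pcompose_mult pcompose_power' shift_uu shift_vv)

lemma intp_Qf: "intp (Qf n j)"
  unfolding Qf_def uu_def vv_def by (intro intp_mult intp_power intp_lin) auto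

lemma degree_Qf: "j \<le> n \<Longrightarrow> degree (Qf n j) \<le> n"
  using degree_lin_pow[of "real q * 0 - of_int p" "real q" "n - j" "of_int r * 0 - of_int s" "of_int r" j]
  unfolding Qf_def uu_def vv_def by simp

lemma sumQ: "(\<Sum>j\<le>n. smult (w j) (Qf n j)) = ef (uu 0) (vv 0) n (\<Sum>j\<le>n. monom (w j) j)"
  by (simp add: ef_sum ef_monom Qf_def)

lemma indepQ:
  assumes "(\<Sum>j\<le>n. smult (w j) (Qf n j)) = 0" and "j \<le> n" shows "w j = 0"
proof -
  define g where "g = (\<Sum>j\<le>n. monom (w j) j)"
  have cg: "coeff g i = (if i \<le> n then w i else 0)" for i
  proof -
    have "coeff g i = (\<Sum>j\<le>n. if j = i then w j else 0)"
      unfolding g_def coeff_sum coeff_monom ..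
    also have "\<dots> = (if i \<le> n then w i else 0)" by (subst sum.delta) auto
    finally show ?thesis .
  qed
  have "degree g \<le> n" by (rule degree_le) (auto simp: cg)
  moreover have "ef (uu 0) (vv 0) n g = 0" unfolding g_def sumQ[symmetric] by (rule assms(1))
  ultimately have "g = 0" by (rule indep[rotated])
  hence "coeff g j = 0" by simp
  thus ?thesis using cg assms(2) by simp
qed

lemma inj_Qf: "inj_on (Qf n) {..n}"
proof (rule inj_onI)
  fix a b assume a: "a \<in> {..n}" and b: "b \<in> {..n}" and e: "Qf n a = Qf n b"
  show "a = b"
  proof (rule ccontr)
    assume ab: "a \<noteq> b"
    define w where "w j = (if j = a then 1 else 0) - (if j = b then 1 else (0::real))" for j
    have "(\<Sum>j\<le>n. smult (w j) (Qf n j)) = (\<Sum>j\<le>n. smult (if j = a then 1 else 0) (Qf n j)) - (\<Sum>j\<le>n. smult (if j = b then 1 else 0) (Qf n j))"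
      unfolding w_def by (simp add: smult_diff_left sum_subtractf)
    also have "\<dots> = Qf n a - Qf n b"
      using a b by (simp add: if_distrib[of "\<lambda>c. smult c _"] sum.delta cong: if_cong)
    also have "\<dots> = 0" using e by simp
    finally have sz: "(\<Sum>j\<le>n. smult (w j) (Qf n j)) = 0" .
    have "a \<le> n" using a by simp
    with sz have "w a = 0" by (rule indepQ)
    thus False using ab by (simp add: w_def)
  qed
qed

end



lemma pw:
  fixes Q :: real assumes Q: "Q > 0" and k: "k \<le> n"
  shows "Q powi (2 * int k - int n) * ((1 / Q + 1 / Q) ^ k * (Q + Q) ^ (n - k)) = 2 ^ n"
proof -
  have ee: "2 * int k - int n = int k - int (n - k)" using k by simp
  have "Q powi (2 * int k - int n) = Q powi (int k - int (n - k))" by (simp only: ee)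
  also have "\<dots> = Q powi int k / Q powi int (n - k)" by (rule power_int_diff) (use Q in simp)
  finally have e1: "Q powi (2 * int k - int n) = Q ^ k / Q ^ (n - k)" by simp
  have e2: "(1 / Q + 1 / Q) ^ k = 2 ^ k / Q ^ k" by (simp add: power_divide)
  have e3: "(Q + Q) ^ (n - k) = 2 ^ (n - k) * Q ^ (n - k)" by (simp add: power_mult_distrib)
  have e4: "(2::real) ^ k * 2 ^ (n - k) = 2 ^ n" using k by (simp flip: power_add)
  show ?thesis unfolding e1 e2 e3 using Q e4 by (simp add: field_simps)
qed

context cfd begin

lemma Qf_bound:
  assumes b1: "\<bar>real q * x - of_int p\<bar> \<le> 1 / real q" and b2: "\<bar>of_int r * x - of_int s\<bar> \<le> 1 / real q"
    and rq: "\<bar>real_of_int r\<bar> \<le> real q" and j: "j \<le> n"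
  shows "\<bar>coeff (uu x ^ (n - j) * vv x ^ j) k\<bar> \<le> 2 ^ n * real q powi (2 * int k - int n)"
proof -
  have Q: "real q > 0" using q1 by simp
  have s1: "\<And>k. \<bar>coeff (1 * uu x ^ (n - j)) k\<bar> \<le> 2 ^ (0 + (n - j)) * real q powi (2 * int k - int (0 + (n - j)))"
    unfolding uu_def by (rule lin_pow_bound_k[OF Q one_bound_k[OF Q] b1]) simp
  have "\<bar>coeff ((1 * uu x ^ (n - j)) * vv x ^ j) k\<bar> \<le> 2 ^ ((0 + (n - j)) + j) * real q powi (2 * int k - int ((0 + (n - j)) + j))"
    unfolding vv_def[of x] by (rule lin_pow_bound_k[OF Q s1 b2 rq])
  thus ?thesis using j by simp
qed

lemma Gen_bound:
  assumes b1: "\<bar>real q * x - of_int p\<bar> \<le> 1 / real q" and b2: "\<bar>of_int r * x - of_int s\<bar> \<le> 1 / real q"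
    and rq: "\<bar>real_of_int r\<bar> \<le> real q" and l: "l \<ge> 0"
    and P: "\<And>k. k \<le> n \<Longrightarrow> \<bar>coeff P k\<bar> \<le> l * real q powi (2 * int k - int n)"
  shows "\<bar>coeff (Gen n x P) i\<bar> \<le> (real n + 1) * 2 ^ n * l"
proof -
  have Q: "real q > 0" using q1 by simp
  have trm: "\<bar>coeff P k * coeff (L1 x ^ k * L2 ^ (n - k)) i\<bar> \<le> 2 ^ n * l" if k: "k \<le> n" for k
  proof -
    have a1: "\<bar>ee * (of_int r * x - of_int s)\<bar> \<le> 1 / real q" using b2 by (simp add: abs_mult ee_abs)
    have a2: "\<bar>- ee * (real q * x - of_int p)\<bar> \<le> 1 / real q" using b1 by (simp add: abs_mult ee_abs)
    have a3: "\<bar>- ee * of_int r\<bar> \<le> real q" using rq by (simp add: abs_mult ee_abs)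
    have a4: "\<bar>ee * real q\<bar> \<le> real q" by (simp add: abs_mult ee_abs)
    have s1: "\<And>i. \<bar>coeff (1 * L1 x ^ k) i\<bar> \<le> (1 / real q + 1 / real q) ^ k * 1"
      unfolding L1_def by (rule lin_pow_bound[OF _ a1 a2]) (auto simp: coeff_1)
    have s2: "\<bar>coeff ((1 * L1 x ^ k) * L2 ^ (n - k)) i\<bar> \<le> (real q + real q) ^ (n - k) * ((1 / real q + 1 / real q) ^ k * 1)"
      unfolding L2_def by (rule lin_pow_bound[OF s1 a3 a4])
    have "\<bar>coeff P k * coeff (L1 x ^ k * L2 ^ (n - k)) i\<bar>
        \<le> (l * real q powi (2 * int k - int n)) * ((1 / real q + 1 / real q) ^ k * (real q + real q) ^ (n - k))"
      unfolding abs_mult using P[OF k] s2 by (intro mult_mono) (auto simp: mult.commute)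
    also have "\<dots> = l * 2 ^ n" using pw[OF Q k] by (simp add: mult.assoc)
    finally show ?thesis by (simp only: mult.commute)
  qed
  have "\<bar>coeff (Gen n x P) i\<bar> = \<bar>\<Sum>k\<le>n. coeff P k * coeff (L1 x ^ k * L2 ^ (n - k)) i\<bar>"
    by (simp add: Gen_def coeff_sum)
  also have "\<dots> \<le> (\<Sum>k\<le>n. \<bar>coeff P k * coeff (L1 x ^ k * L2 ^ (n - k)) i\<bar>)" by (rule sum_abs)
  also have "\<dots> \<le> (\<Sum>k\<le>n. 2 ^ n * l)" by (intro sum_mono trm) simp
  also have "\<dots> = (real n + 1) * 2 ^ n * l" by simp
  finally show ?thesis .
qed

lemma lower:
  assumes b1: "\<bar>real q * x - of_int p\<bar> \<le> 1 / real q" and b2: "\<bar>of_int r * x - of_int s\<bar> \<le> 1 / real q"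
    and rq: "\<bar>real_of_int r\<bar> \<le> real q" and l: "l \<ge> 0"
    and PL: "P \<in> int_polys n" and P0: "P \<noteq> 0"
    and Pb: "\<And>k. k \<le> n \<Longrightarrow> \<bar>divided_deriv k P x\<bar> \<le> l * real q powi (2 * int k - int n)"
  shows "1 \<le> (real n + 1) * 2 ^ n * l"
proof -
  have dP: "degree P \<le> n" and iP: "intp P" using PL by (auto simp: int_polys_def intp_def)
  define G0 where "G0 = Gen n 0 P"
  have iG: "intp G0" unfolding G0_def by (rule intp_Gen0[OF iP])
  have eP: "P = ef (uu 0) (vv 0) n G0" unfolding G0_def by (rule expand[OF dP])
  define P' where "P' = pcompose P [:x, 1:]"
  have e1: "P' = ef (uu x) (vv x) n G0" unfolding P'_def by (subst eP) (rule shift_ef)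
  have dP': "degree P' \<le> n" unfolding P'_def using degree_pcompose_le[of P "[:x, 1:]"] dP by simp
  have e2: "P' = ef (uu x) (vv x) n (Gen n x P')" by (rule expand[OF dP'])
  have "ef (uu x) (vv x) n (G0 - Gen n x P') = 0" using e1 e2 by (simp add: ef_diff)
  moreover have "degree (G0 - Gen n x P') \<le> n"
    using degree_diff_le[of G0 n "Gen n x P'"] degree_Gen[of n 0 P] degree_Gen[of n x P'] G0_def by simp
  ultimately have "G0 - Gen n x P' = 0" by (rule indep)
  hence eG: "G0 = Gen n x P'" by simp
  have "G0 \<noteq> 0" using eP P0 by auto
  hence lc: "coeff G0 (degree G0) \<noteq> 0" by simp
  have "1 \<le> \<bar>coeff G0 (degree G0)\<bar>" using iG lc unfolding intp_def by (intro Ints_nonzero_abs_ge1) auto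
  also have "\<dots> \<le> (real n + 1) * 2 ^ n * l" unfolding eG
    by (rule Gen_bound[OF b1 b2 rq l]) (use Pb in \<open>simp add: P'_def divided_deriv_coeff\<close>)
  finally show ?thesis .
qed

end



theorem proposition1:
  fixes \<xi> :: real and n q :: nat
  assumes "\<xi> \<notin> \<rat>" and "n \<ge> 1" and "convergent_denominator \<xi> q"
  shows "succ_min (int_polys n) (conv_body n \<xi> q) (n + 1) \<le> 2 ^ n
       \<and> succ_min (int_polys n) (conv_body n \<xi> q) 1 \<ge> 1 / (2 ^ (n\<^sup>2) * fact (n + 1))
       \<and> (\<exists>B. B \<subseteq> scale_body (2 ^ n) (conv_body n \<xi> q) \<and> is_Z_basis B (int_polys n))"
proof -
  obtain p r s :: int where d: "q \<ge> 1" "0 \<le> r" "r \<le> int q"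
    "\<bar>real q * \<xi> - real_of_int p\<bar> \<le> 1 / real q" "\<bar>real_of_int r * \<xi> - real_of_int s\<bar> \<le> 1 / real q"
    "\<bar>p * r - int q * s\<bar> = 1"
    using conv_data[OF assms(1) assms(3)] by blast
  interpret cfd p r s q using d by unfold_locales auto
  have rq: "\<bar>real_of_int r\<bar> \<le> real q" using d(2,3) by simp
  have Qpos: "real q > 0" using d(1) by simp
  define B where "B = Qf n ` {..n}"
  define C where "C = conv_body n \<xi> q"
  define L where "L = int_polys n"
  have QC: "smult (1 / 2 ^ n) (Qf n j) \<in> C" if j: "j \<le> n" for j
    unfolding C_def conv_body_def
  proof (intro CollectI conjI allI impI)
    show "degree (smult (1 / 2 ^ n) (Qf n j)) \<le> n"
      using degree_smult_le[of "1 / 2 ^ n" "Qf n j"] degree_Qf[OF j] by linarith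
    fix k assume k: "k \<le> n"
    have "\<bar>divided_deriv k (Qf n j) \<xi>\<bar> \<le> 2 ^ n * real q powi (2 * int k - int n)"
      unfolding divided_deriv_coeff shift_Qf by (rule Qf_bound[OF d(4) d(5) rq j])
    thus "\<bar>divided_deriv k (smult (1 / 2 ^ n) (Qf n j)) \<xi>\<bar> \<le> real q powi (2 * int k - int n)"
      by (simp add: divided_deriv_smult abs_mult field_simps)
  qed
  have BS: "B \<subseteq> scale_body (2 ^ n) C"
  proof
    fix P assume "P \<in> B"
    then obtain j where j: "j \<le> n" "P = Qf n j" by (auto simp: B_def)
    have "P = smult (2 ^ n) (smult (1 / 2 ^ n) (Qf n j))" using j by simp
    thus "P \<in> scale_body (2 ^ n) C" unfolding scale_body_def using QC[OF j(1)] by blast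
  qed
  have BL: "B \<subseteq> L"
    using degree_Qf intp_Qf by (auto simp: B_def L_def int_polys_def intp_def)
  have finB: "finite B" by (simp add: B_def)
  have cardB: "card B = n + 1" unfolding B_def by (subst card_image[OF inj_Qf]) simp
  have reidx: "(\<Sum>P\<in>B. f P) = (\<Sum>j\<le>n. f (Qf n j))" for f :: "real poly \<Rightarrow> real poly"
    unfolding B_def by (rule sum.reindex[OF inj_Qf, unfolded comp_def])
  have indB: "real_lin_indep B"
    unfolding real_lin_indep_def
  proof (intro conjI finB allI impI ballI)
    fix c :: "real poly \<Rightarrow> real" and P
    assume "(\<Sum>p\<in>B. smult (c p) p) = 0" and P: "P \<in> B"
    hence sz: "(\<Sum>j\<le>n. smult (c (Qf n j)) (Qf n j)) = 0" by (simp add: reidx)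
    obtain j where j: "j \<le> n" "P = Qf n j" using P by (auto simp: B_def)
    show "c P = 0" using indepQ[of "\<lambda>j. c (Qf n j)", OF sz j(1)] j(2) by simp
  qed
  have ZB: "is_Z_basis B L"
    unfolding is_Z_basis_def
  proof (intro conjI finB BL allI impI ballI)
    fix c :: "real poly \<Rightarrow> int" and P
    assume "(\<Sum>p\<in>B. smult (of_int (c p)) p) = 0" and P: "P \<in> B"
    hence sz: "(\<Sum>j\<le>n. smult (of_int (c (Qf n j))) (Qf n j)) = 0" by (simp add: reidx)
    obtain j where j: "j \<le> n" "P = Qf n j" using P by (auto simp: B_def)
    show "c P = 0" using indepQ[of "\<lambda>j. of_int (c (Qf n j))", OF sz j(1)] j(2) by simp
  next
    fix P assume PL: "P \<in> L"
    have dP: "degree P \<le> n" and iP: "intp P" using PL by (auto simp: L_def int_polys_def intp_def)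
    define G0 where "G0 = Gen n 0 P"
    have iG: "intp G0" unfolding G0_def by (rule intp_Gen0[OF iP])
    have eP: "P = (\<Sum>j\<le>n. smult (coeff G0 j) (Qf n j))"
      using expand[OF dP, of 0] unfolding G0_def ef_def Qf_def by simp
    define c where "c P = \<lfloor>coeff G0 (the_inv_into {..n} (Qf n) P)\<rfloor>" for P
    have "(\<Sum>p\<in>B. smult (of_int (c p)) p) = (\<Sum>j\<le>n. smult (of_int (c (Qf n j))) (Qf n j))"
      by (simp add: reidx)
    also have "\<dots> = (\<Sum>j\<le>n. smult (coeff G0 j) (Qf n j))"
    proof (intro sum.cong refl)
      fix j assume j: "j \<in> {..n}"
      have "coeff G0 j \<in> \<int>" using iG by (simp add: intp_def)
      hence fl: "of_int \<lfloor>coeff G0 j\<rfloor> = coeff G0 j" by (metis Ints_cases floor_of_int)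
      show "smult (of_int (c (Qf n j))) (Qf n j) = smult (coeff G0 j) (Qf n j)"
        by (simp only: c_def the_inv_into_f_f[OF inj_Qf j] fl)
    qed
    finally show "\<exists>c::real poly \<Rightarrow> int. P = (\<Sum>p\<in>B. smult (of_int (c p)) p)"
      using eP by metis
  qed
  define S1 where "S1 = {l. l > 0 \<and> (\<exists>S. S \<subseteq> L \<inter> scale_body l C \<and> card S = n + 1 \<and> real_lin_indep S)}"
  define S2 where "S2 = {l. l > 0 \<and> (\<exists>S. S \<subseteq> L \<inter> scale_body l C \<and> card S = 1 \<and> real_lin_indep S)}"
  have part1: "Inf S1 \<le> 2 ^ n"
  proof (rule cInf_lower)
    show "2 ^ n \<in> S1" unfolding S1_def using BS BL cardB indB by auto
    show "bdd_below S1" unfolding S1_def by (rule bdd_belowI[of _ 0]) auto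
  qed
  have part2: "1 / (2 ^ (n\<^sup>2) * fact (n + 1)) \<le> Inf S2"
  proof (rule cInf_greatest)
    have Q0: "Qf n 0 \<in> B" by (simp add: B_def)
    have "Qf n 0 \<noteq> 0"
    proof -
      have "uu 0 \<noteq> 0" using Qpos by (simp add: uu_def)
      thus ?thesis by (simp add: Qf_def)
    qed
    hence "real_lin_indep {Qf n 0}" by (simp add: real_lin_indep_def)
    moreover have "{Qf n 0} \<subseteq> L \<inter> scale_body (2 ^ n) C" using Q0 BS BL by auto
    ultimately have "(2::real) ^ n \<in> S2" unfolding S2_def by auto
    thus "S2 \<noteq> {}" by blast
  next
    fix l assume "l \<in> S2"
    then obtain S where l0: "l > 0" and SS: "S \<subseteq> L \<inter> scale_body l C" and c1: "card S = 1"
      and ind: "real_lin_indep S" unfolding S2_def by blast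
    obtain P where SP: "S = {P}" using c1 by (rule card_1_singletonE)
    have PL: "P \<in> L" and PC: "P \<in> scale_body l C" using SS SP by auto
    obtain P0 where P0: "P0 \<in> C" "P = smult l P0" using PC by (auto simp: scale_body_def)
    have Pn0: "P \<noteq> 0"
    proof
      assume "P = 0"
      hence "(\<Sum>p\<in>S. smult ((\<lambda>_. 1::real) p) p) = 0" using SP by simp
      thus False using ind SP unfolding real_lin_indep_def by force
    qed
    have Pb: "\<bar>divided_deriv k P \<xi>\<bar> \<le> l * real q powi (2 * int k - int n)" if k: "k \<le> n" for k
    proof -
      have "\<bar>divided_deriv k P0 \<xi>\<bar> \<le> real q powi (2 * int k - int n)"
        using P0(1) k by (auto simp: C_def conv_body_def)
      thus ?thesis using l0 P0(2) by (simp add: divided_deriv_smult abs_mult)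
    qed
    have low: "1 \<le> (real n + 1) * 2 ^ n * l"
      by (rule lower[OF d(4) d(5) rq _ _ Pn0 Pb]) (use l0 PL L_def in auto)
    have A: "(real n + 1) * 2 ^ n \<le> 2 ^ (n\<^sup>2) * fact (n + 1)"
    proof -
      have h: "real (n + 1) \<le> real (fact (n + 1))" by (simp only: of_nat_le_iff fact_ge_self)
      hence f1: "real n + 1 \<le> fact (n + 1)" by (simp only: of_nat_fact of_nat_add of_nat_1)
      have f2: "(2::real) ^ n \<le> 2 ^ (n\<^sup>2)" by (rule power_increasing) (auto simp: power2_eq_square)
      have m: "(real n + 1) * 2 ^ n \<le> fact (n + 1) * (2::real) ^ (n\<^sup>2)"
        by (rule mult_mono[OF f1 f2]) auto
      show ?thesis by (subst mult.commute[of "(2::real) ^ (n\<^sup>2)"]) (rule m)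
    qed
    have "1 / (2 ^ (n\<^sup>2) * fact (n + 1)) \<le> 1 / ((real n + 1) * 2 ^ n)"
      using A by (intro divide_left_mono) auto
    also have "\<dots> \<le> l"
    proof -
      have X: "(real n + 1) * 2 ^ n > 0" by simp
      have "1 \<le> l * ((real n + 1) * 2 ^ n)" using low by (simp only: mult.commute)
      thus ?thesis by (simp only: pos_divide_le_eq[OF X])
    qed
    finally show "1 / (2 ^ (n\<^sup>2) * fact (n + 1)) \<le> l" .
  qed
  show ?thesis
    using part1 part2 BS ZB unfolding succ_min_def S1_def S2_def C_def L_def by blast
qed


end
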